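(* Let $Y$, $Z$ be bigraphs and $f,g: Y\to Z$ bigraph homomorphisms which are $\times$-homotopic. Then for every bigraph $X$ the induced order-preserving maps $f_*, g_*: \mathrm{Hom}_{/K_2}(X,Y)\to \mathrm{Hom}_{/K_2}(X,Z)$, given by $(f_*\eta)(v)=f(\eta(v))$, are homotopic (as maps of geometric realizations).
   Context: A graph is a set $V$ with a symmetric relation $E\subset V\times V$ (loops allowed); $K_2$ has vertices $0,1$ and edges $(0,1),(1,0)$. A bigraph is a graph $X$ with a graph homomorphism $\varepsilon_X: X\to K_2$; $V_i(X)=\varepsilon_X^{-1}(i)$; bigraph homomorphisms are graph homomorphisms commuting with colorings. A multi-homomorphism $\eta$ from $X$ to $Y$ assigns to each $v\in V(X)$ a finite nonempty subset $\eta(v)\subset V(Y)$ such that $(v,w)\in E(X)$ implies $\eta(v)\times\eta(w)\subset E(Y)$; it is 2-colored if $\eta(v)\subset V_i(Y)$ for $v\in V_i(X)$. $\mathrm{Hom}_{/K_2}(X,Y)$ is the poset of 2-colored multi-homomorphisms ordered by $\eta\le\eta'$ iff $\eta(v)\subset\eta'(v)$ for all $v$; a bigraph homomorphism is identified with the multi-homomorphism $v\mapsto\{f(v)\}$. Bigraph homomorphisms $f,g:Y\to Z$ are $\times$-homotopic if they lie in the same connected component of $\mathrm{Hom}_{/K_2}(Y,Z)$. Posets are regarded as spaces via geometric realizations of order complexes. *)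

theory Defs
  imports "HOL-Analysis.Analysis"
begin

definition is_graph :: "'a set \<Rightarrow> ('a \<times> 'a) set \<Rightarrow> bool" where
  "is_graph V E \<longleftrightarrow> E \<subseteq> V \<times> V \<and> sym E"

definition graph_hom :: "'a set \<Rightarrow> ('a \<times> 'a) set \<Rightarrow> 'b set \<Rightarrow> ('b \<times> 'b) set \<Rightarrow> ('a \<Rightarrow> 'b) \<Rightarrow> bool" where
  "graph_hom V E V' E' f \<longleftrightarrow> (\<forall>v\<in>V. f v \<in> V') \<and> (\<forall>(v,w)\<in>E. (f v, f w) \<in> E')"

definition K2_vertices :: "nat set" where "K2_vertices = {0, 1}"
definition K2_edges :: "(nat \<times> nat) set" where "K2_edges = {(0,1), (1,0)}"

definition bigraph :: "'a set \<Rightarrow> ('a \<times> 'a) set \<Rightarrow> ('a \<Rightarrow> nat) \<Rightarrow> bool" where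
  "bigraph V E c \<longleftrightarrow> is_graph V E \<and> graph_hom V E K2_vertices K2_edges c"

definition bigraph_hom ::
  "'a set \<Rightarrow> ('a \<times> 'a) set \<Rightarrow> ('a \<Rightarrow> nat) \<Rightarrow> 'b set \<Rightarrow> ('b \<times> 'b) set \<Rightarrow> ('b \<Rightarrow> nat) \<Rightarrow> ('a \<Rightarrow> 'b) \<Rightarrow> bool" where
  "bigraph_hom VX EdX cX VY EdY cY f \<longleftrightarrow> graph_hom VX EdX VY EdY f \<and> (\<forall>v\<in>VX. cY (f v) = cX v)"

text \<open>2-colored multi-homomorphisms; values outside the vertex set are fixed to be empty
  so that each multi-homomorphism has a unique representation.\<close>
definition multi_hom2 ::
  "'a set \<Rightarrow> ('a \<times> 'a) set \<Rightarrow> ('a \<Rightarrow> nat) \<Rightarrow> 'b set \<Rightarrow> ('b \<times> 'b) set \<Rightarrow> ('b \<Rightarrow> nat) \<Rightarrow> ('a \<Rightarrow> 'b set) \<Rightarrow> bool" where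
  "multi_hom2 VX EdX cX VY EdY cY \<eta> \<longleftrightarrow>
     (\<forall>v\<in>VX. finite (\<eta> v) \<and> \<eta> v \<noteq> {} \<and> \<eta> v \<subseteq> VY \<and> (\<forall>w\<in>\<eta> v. cY w = cX v)) \<and>
     (\<forall>(v,w)\<in>EdX. \<eta> v \<times> \<eta> w \<subseteq> EdY) \<and>
     (\<forall>v. v \<notin> VX \<longrightarrow> \<eta> v = {})"

definition Hom2 ::
  "'a set \<Rightarrow> ('a \<times> 'a) set \<Rightarrow> ('a \<Rightarrow> nat) \<Rightarrow> 'b set \<Rightarrow> ('b \<times> 'b) set \<Rightarrow> ('b \<Rightarrow> nat) \<Rightarrow> ('a \<Rightarrow> 'b set) set" where
  "Hom2 VX EdX cX VY EdY cY = {\<eta>. multi_hom2 VX EdX cX VY EdY cY \<eta>}"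

definition hom_le :: "('a \<Rightarrow> 'b set) \<Rightarrow> ('a \<Rightarrow> 'b set) \<Rightarrow> bool" where
  "hom_le \<eta> \<eta>' \<longleftrightarrow> (\<forall>v. \<eta> v \<subseteq> \<eta>' v)"

definition sing_hom :: "'a set \<Rightarrow> ('a \<Rightarrow> 'b) \<Rightarrow> ('a \<Rightarrow> 'b set)" where
  "sing_hom V f = (\<lambda>v. if v \<in> V then {f v} else {})"

definition push :: "('b \<Rightarrow> 'c) \<Rightarrow> ('a \<Rightarrow> 'b set) \<Rightarrow> ('a \<Rightarrow> 'c set)" where
  "push f \<eta> = (\<lambda>v. f ` \<eta> v)"

definition is_chain :: "('p \<Rightarrow> 'p \<Rightarrow> bool) \<Rightarrow> 'p set \<Rightarrow> bool" where
  "is_chain le S \<longleftrightarrow> (\<forall>x\<in>S. \<forall>y\<in>S. le x y \<or> le y x)"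

definition supp_r :: "('p \<Rightarrow> real) \<Rightarrow> 'p set" where
  "supp_r \<alpha> = {p. \<alpha> p \<noteq> 0}"

definition real_carrier :: "'p set \<Rightarrow> ('p \<Rightarrow> 'p \<Rightarrow> bool) \<Rightarrow> ('p \<Rightarrow> real) set" where
  "real_carrier P le = {\<alpha>. finite (supp_r \<alpha>) \<and> supp_r \<alpha> \<subseteq> P \<and> is_chain le (supp_r \<alpha>) \<and>
                         (\<forall>p. 0 \<le> \<alpha> p) \<and> (\<Sum>p\<in>supp_r \<alpha>. \<alpha> p) = 1}"

definition closed_simplex :: "'p set \<Rightarrow> ('p \<Rightarrow> 'p \<Rightarrow> bool) \<Rightarrow> 'p set \<Rightarrow> ('p \<Rightarrow> real) set" where
  "closed_simplex P le \<sigma> = {\<alpha> \<in> real_carrier P le. supp_r \<alpha> \<subseteq> \<sigma>}"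

definition realization :: "'p set \<Rightarrow> ('p \<Rightarrow> 'p \<Rightarrow> bool) \<Rightarrow> ('p \<Rightarrow> real) topology" where
  "realization P le = topology (\<lambda>U. U \<subseteq> real_carrier P le \<and>
     (\<forall>\<sigma>. finite \<sigma> \<and> \<sigma> \<subseteq> P \<and> is_chain le \<sigma> \<longrightarrow>
        openin (top_of_set (closed_simplex P le \<sigma>)) (U \<inter> closed_simplex P le \<sigma>)))"

definition vertex_pt :: "'p \<Rightarrow> ('p \<Rightarrow> real)" where
  "vertex_pt p = (\<lambda>q. if q = p then 1 else 0)"

text \<open>The (affine-linear) realization of a map of posets.\<close>
definition realize_map :: "('p \<Rightarrow> 'q) \<Rightarrow> ('p \<Rightarrow> real) \<Rightarrow> ('q \<Rightarrow> real)" where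
  "realize_map \<phi> \<alpha> = (\<lambda>q. \<Sum>p\<in>{p \<in> supp_r \<alpha>. \<phi> p = q}. \<alpha> p)"

definition x_homotopic ::
  "'b set \<Rightarrow> ('b \<times> 'b) set \<Rightarrow> ('b \<Rightarrow> nat) \<Rightarrow> 'c set \<Rightarrow> ('c \<times> 'c) set \<Rightarrow> ('c \<Rightarrow> nat) \<Rightarrow> ('b \<Rightarrow> 'c) \<Rightarrow> ('b \<Rightarrow> 'c) \<Rightarrow> bool" where
  "x_homotopic VY EdY cY VZ EdZ cZ f g \<longleftrightarrow>
     connected_component_of (realization (Hom2 VY EdY cY VZ EdZ cZ) hom_le)
       (vertex_pt (sing_hom VY f)) (vertex_pt (sing_hom VY g))"

end

theory Submission
  imports Defs
begin


lemma openin_realization: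
  "openin (realization P le) U \<longleftrightarrow> U \<subseteq> real_carrier P le \<and>
     (\<forall>\<sigma>. finite \<sigma> \<and> \<sigma> \<subseteq> P \<and> is_chain le \<sigma> \<longrightarrow>
        openin (top_of_set (closed_simplex P le \<sigma>)) (U \<inter> closed_simplex P le \<sigma>))"
proof -
  define L where "L = (\<lambda>U. U \<subseteq> real_carrier P le \<and>
     (\<forall>\<sigma>. finite \<sigma> \<and> \<sigma> \<subseteq> P \<and> is_chain le \<sigma> \<longrightarrow>
        openin (top_of_set (closed_simplex P le \<sigma>)) (U \<inter> closed_simplex P le \<sigma>)))"
  have 1: "L (S \<inter> T)" if S: "L S" and T: "L T" for S T
    unfolding L_def
  proof (intro conjI allI impI)
    show "S \<inter> T \<subseteq> real_carrier P le" using S unfolding L_def by blast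
    fix \<sigma> assume h: "finite \<sigma> \<and> \<sigma> \<subseteq> P \<and> is_chain le \<sigma>"
    have "S \<inter> T \<inter> closed_simplex P le \<sigma> = (S \<inter> closed_simplex P le \<sigma>) \<inter> (T \<inter> closed_simplex P le \<sigma>)" by blast
    then show "openin (top_of_set (closed_simplex P le \<sigma>)) (S \<inter> T \<inter> closed_simplex P le \<sigma>)"
      using S T h unfolding L_def by (metis openin_Int)
  qed
  have 2: "L (\<Union>K)" if K: "\<forall>S\<in>K. L S" for K
    unfolding L_def
  proof (intro conjI allI impI)
    show "\<Union>K \<subseteq> real_carrier P le" using K unfolding L_def by blast
    fix \<sigma> assume h: "finite \<sigma> \<and> \<sigma> \<subseteq> P \<and> is_chain le \<sigma>"
    have "\<Union>K \<inter> closed_simplex P le \<sigma> = \<Union>((\<lambda>S. S \<inter> closed_simplex P le \<sigma>) ` K)" by blast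
    then show "openin (top_of_set (closed_simplex P le \<sigma>)) (\<Union>K \<inter> closed_simplex P le \<sigma>)"
      using K h unfolding L_def by (metis (no_types, lifting) imageE openin_Union)
  qed
  have "istopology L" unfolding istopology_def using 1 2 by blast
  then show ?thesis unfolding realization_def L_def[symmetric] by (simp add: L_def)
qed

lemma closed_simplex_sub: "closed_simplex P le \<sigma> \<subseteq> real_carrier P le"
  unfolding closed_simplex_def by blast

lemma topspace_realization: "topspace (realization P le) = real_carrier P le"
proof -
  have "openin (realization P le) (real_carrier P le)"
    unfolding openin_realization
    by (auto simp: Int_absorb1 closed_simplex_sub)
  then show ?thesis
    by (metis openin_realization openin_subset subset_antisym openin_topspace)
qed




lemma supp_vertex_pt[simp]: "supp_r (vertex_pt p) = {p}"
  unfolding supp_r_def vertex_pt_def by auto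

lemma closed_simplex_supp_ne:
  assumes "\<alpha> \<in> closed_simplex P le \<sigma>" shows "supp_r \<alpha> \<noteq> {}" "supp_r \<alpha> \<subseteq> \<sigma>"
  using assms unfolding closed_simplex_def real_carrier_def by auto

lemma realization_component_comparable:
  assumes "connected_component_of (realization P le) (vertex_pt a) (vertex_pt b)"
  shows "(\<lambda>x y. x \<in> P \<and> y \<in> P \<and> (le x y \<or> le y x))\<^sup>*\<^sup>* a b"
proof -
  define R where "R = (\<lambda>x y. x \<in> P \<and> y \<in> P \<and> (le x y \<or> le y x))"
  define C where "C = {y. R\<^sup>*\<^sup>* a y}"
  define U where "U = {\<alpha>\<in>real_carrier P le. supp_r \<alpha> \<subseteq> C}"
  define V where "V = {\<alpha>\<in>real_carrier P le. \<not> supp_r \<alpha> \<subseteq> C}"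
  have dich: "\<sigma> \<subseteq> C \<or> \<sigma> \<inter> C = {}" if "\<sigma> \<subseteq> P" "is_chain le \<sigma>" for \<sigma>
  proof (cases "\<sigma> \<inter> C = {}")
    case False
    then obtain x where x: "x \<in> \<sigma>" "x \<in> C" by blast
    have "y \<in> C" if "y \<in> \<sigma>" for y
    proof -
      have "R x y" using that x \<open>\<sigma> \<subseteq> P\<close> \<open>is_chain le \<sigma>\<close> unfolding R_def is_chain_def by blast
      then show ?thesis using x(2) unfolding C_def by (simp add: rtranclp.rtrancl_into_rtrancl)
    qed
    then show ?thesis by blast
  qed simp
  have oU: "openin (realization P le) U"
    unfolding openin_realization
  proof (intro conjI allI impI)
    show "U \<subseteq> real_carrier P le" unfolding U_def by blast
    fix \<sigma> assume h: "finite \<sigma> \<and> \<sigma> \<subseteq> P \<and> is_chain le \<sigma>"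
    show "openin (top_of_set (closed_simplex P le \<sigma>)) (U \<inter> closed_simplex P le \<sigma>)"
    proof (cases "\<sigma> \<subseteq> C")
      case True
      then have "U \<inter> closed_simplex P le \<sigma> = closed_simplex P le \<sigma>"
        unfolding U_def using closed_simplex_sub closed_simplex_supp_ne(2) by blast
      then show ?thesis by simp
    next
      case False
      then have "\<sigma> \<inter> C = {}" using dich h by blast
      then have "U \<inter> closed_simplex P le \<sigma> = {}"
        unfolding U_def using closed_simplex_supp_ne by blast
      then show ?thesis by simp
    qed
  qed
  have oV: "openin (realization P le) V"
    unfolding openin_realization
  proof (intro conjI allI impI)
    show "V \<subseteq> real_carrier P le" unfolding V_def by blast
    fix \<sigma> assume h: "finite \<sigma> \<and> \<sigma> \<subseteq> P \<and> is_chain le \<sigma>"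
    show "openin (top_of_set (closed_simplex P le \<sigma>)) (V \<inter> closed_simplex P le \<sigma>)"
    proof (cases "\<sigma> \<subseteq> C")
      case True
      then have "V \<inter> closed_simplex P le \<sigma> = {}"
        unfolding V_def using closed_simplex_sub closed_simplex_supp_ne(2) by blast
      then show ?thesis by simp
    next
      case False
      then have "\<sigma> \<inter> C = {}" using dich h by blast
      then have "V \<inter> closed_simplex P le \<sigma> = closed_simplex P le \<sigma>"
        unfolding V_def using closed_simplex_sub closed_simplex_supp_ne by blast
      then show ?thesis by simp
    qed
  qed
  have "topspace (realization P le) - U = V"
    unfolding topspace_realization U_def V_def by blast
  then have cU: "closedin (realization P le) U"
    unfolding closedin_def using oV oU openin_subset by auto
  from assms obtain T where T: "connectedin (realization P le) T" "vertex_pt a \<in> T" "vertex_pt b \<in> T"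
    unfolding connected_component_of_def by blast
  have "vertex_pt a \<in> real_carrier P le"
    using T connectedin_subset_topspace topspace_realization by blast
  then have "vertex_pt a \<in> U" unfolding U_def C_def by simp
  then have "T \<subseteq> U" using connectedin_clopen_cases[OF T(1) cU oU] T(2) by (auto simp: disjnt_def)
  then have "vertex_pt b \<in> U" using T by blast
  then show ?thesis unfolding U_def C_def R_def by simp
qed




definition cabove :: "('p \<Rightarrow> 'p \<Rightarrow> bool) \<Rightarrow> ('p \<Rightarrow> real) \<Rightarrow> 'p \<Rightarrow> real" where
  "cabove le \<alpha> x = (\<Sum>y\<in>{y\<in>supp_r \<alpha>. y \<noteq> x \<and> le x y}. \<alpha> y)"

definition wone :: "('p \<Rightarrow> 'p \<Rightarrow> bool) \<Rightarrow> ('p \<Rightarrow> real) \<Rightarrow> real \<Rightarrow> 'p \<Rightarrow> real" where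
  "wone le \<alpha> t x = max 0 (min (\<alpha> x) (t - cabove le \<alpha> x))"

definition stair :: "('p \<Rightarrow> 'p \<Rightarrow> bool) \<Rightarrow> ('p \<Rightarrow> 'q) \<Rightarrow> ('p \<Rightarrow> 'q) \<Rightarrow> real \<Rightarrow> ('p \<Rightarrow> real) \<Rightarrow> ('q \<Rightarrow> real)" where
  "stair le \<phi> \<psi> t \<alpha> = (\<lambda>q. (\<Sum>x\<in>{x\<in>supp_r \<alpha>. \<psi> x = q}. wone le \<alpha> t x)
       + (\<Sum>x\<in>{x\<in>supp_r \<alpha>. \<phi> x = q}. \<alpha> x - wone le \<alpha> t x))"

locale stair_setup =
  fixes P :: "'p set" and le :: "'p \<Rightarrow> 'p \<Rightarrow> bool"
    and Q :: "'q set" and le' :: "'q \<Rightarrow> 'q \<Rightarrow> bool"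
    and \<phi> \<psi> :: "'p \<Rightarrow> 'q"
  assumes transP: "\<And>x y z. x\<in>P \<Longrightarrow> y\<in>P \<Longrightarrow> z\<in>P \<Longrightarrow> le x y \<Longrightarrow> le y z \<Longrightarrow> le x z"
    and antiP: "\<And>x y. x\<in>P \<Longrightarrow> y\<in>P \<Longrightarrow> le x y \<Longrightarrow> le y x \<Longrightarrow> x = y"
    and reflQ: "\<And>x. x\<in>Q \<Longrightarrow> le' x x"
    and transQ: "\<And>x y z. x\<in>Q \<Longrightarrow> y\<in>Q \<Longrightarrow> z\<in>Q \<Longrightarrow> le' x y \<Longrightarrow> le' y z \<Longrightarrow> le' x z"
    and mapsto: "\<And>x. x\<in>P \<Longrightarrow> \<phi> x \<in> Q \<and> \<psi> x \<in> Q"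
    and mono: "\<And>x y. x\<in>P \<Longrightarrow> y\<in>P \<Longrightarrow> le x y \<Longrightarrow> le' (\<phi> x) (\<phi> y) \<and> le' (\<psi> x) (\<psi> y)"
    and below: "\<And>x. x\<in>P \<Longrightarrow> le' (\<phi> x) (\<psi> x)"
begin

context
  fixes \<alpha> assumes car: "\<alpha> \<in> real_carrier P le"
begin

lemma fin: "finite (supp_r \<alpha>)" and subP: "supp_r \<alpha> \<subseteq> P" and ch: "is_chain le (supp_r \<alpha>)"
  and nn: "\<And>p. 0 \<le> \<alpha> p" and s1: "(\<Sum>p\<in>supp_r \<alpha>. \<alpha> p) = 1"
  using car unfolding real_carrier_def by auto

lemma cabove_nn: "0 \<le> cabove le \<alpha> x"
  unfolding cabove_def using nn by (simp add: sum_nonneg)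

lemma wone_nn: "0 \<le> wone le \<alpha> t x" unfolding wone_def by simp

lemma wone_le: "wone le \<alpha> t x \<le> \<alpha> x" unfolding wone_def using nn[of x] by simp

lemma wone_pos: "wone le \<alpha> t x \<noteq> 0 \<Longrightarrow> cabove le \<alpha> x < t"
  unfolding wone_def using nn[of x] by (auto simp: max_def min_def split: if_splits)

lemma wone_lt: "\<alpha> x - wone le \<alpha> t x \<noteq> 0 \<Longrightarrow> t < cabove le \<alpha> x + \<alpha> x"
  unfolding wone_def using nn[of x] by (auto simp: max_def min_def split: if_splits)

lemma cabove_step:
  assumes x: "x \<in> supp_r \<alpha>" and y: "y \<in> supp_r \<alpha>" and ne: "x \<noteq> y" and lxy: "le x y"
  shows "\<alpha> y + cabove le \<alpha> y \<le> cabove le \<alpha> x"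
proof -
  let ?A = "{z\<in>supp_r \<alpha>. z \<noteq> y \<and> le y z}"
  let ?B = "{z\<in>supp_r \<alpha>. z \<noteq> x \<and> le x z}"
  have sub: "insert y ?A \<subseteq> ?B"
  proof
    fix z assume "z \<in> insert y ?A"
    then show "z \<in> ?B"
    proof
      assume "z = y" then show ?thesis using y ne lxy by auto
    next
      assume z: "z \<in> ?A"
      have "le x z" using transP[of x y z] z x y lxy subP by blast
      moreover have "z \<noteq> x" using antiP[of x y] z x y lxy subP ne by blast
      ultimately show ?thesis using z by blast
    qed
  qed
  have "\<alpha> y + cabove le \<alpha> y = (\<Sum>z\<in>insert y ?A. \<alpha> z)"
    unfolding cabove_def using fin by (subst sum.insert) auto
  also have "\<dots> \<le> (\<Sum>z\<in>?B. \<alpha> z)"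
    using sub fin nn by (intro sum_mono2) auto
  finally show ?thesis unfolding cabove_def .
qed

lemma stair_supp:
  assumes "stair le \<phi> \<psi> t \<alpha> q \<noteq> 0"
  shows "(\<exists>x\<in>supp_r \<alpha>. \<psi> x = q \<and> wone le \<alpha> t x \<noteq> 0) \<or> (\<exists>x\<in>supp_r \<alpha>. \<phi> x = q \<and> \<alpha> x - wone le \<alpha> t x \<noteq> 0)"
proof (rule ccontr)
  assume "\<not> ?thesis"
  then have "(\<Sum>x\<in>{x\<in>supp_r \<alpha>. \<psi> x = q}. wone le \<alpha> t x) = 0"
     "(\<Sum>x\<in>{x\<in>supp_r \<alpha>. \<phi> x = q}. \<alpha> x - wone le \<alpha> t x) = 0"
    by (auto intro!: sum.neutral)
  then show False using assms unfolding stair_def by simp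
qed

lemma stair_nn: "0 \<le> stair le \<phi> \<psi> t \<alpha> q"
  unfolding stair_def using wone_nn wone_le by (auto intro!: add_nonneg_nonneg sum_nonneg)

lemma stair_supp_sub: "supp_r (stair le \<phi> \<psi> t \<alpha>) \<subseteq> \<phi> ` supp_r \<alpha> \<union> \<psi> ` supp_r \<alpha>"
  using stair_supp unfolding supp_r_def by blast

lemma stair_chain: "is_chain le' (supp_r (stair le \<phi> \<psi> t \<alpha>))"
  unfolding is_chain_def
proof (intro ballI)
  fix q1 q2 assume q1: "q1 \<in> supp_r (stair le \<phi> \<psi> t \<alpha>)" and q2: "q2 \<in> supp_r (stair le \<phi> \<psi> t \<alpha>)"
  have cmp: "le a b \<or> le b a" if "a \<in> supp_r \<alpha>" "b \<in> supp_r \<alpha>" for a b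
    using ch that unfolding is_chain_def by blast
  have mixed: "le' (\<phi> a) (\<psi> b)"
    if a: "a \<in> supp_r \<alpha>" "\<alpha> a - wone le \<alpha> t a \<noteq> 0" and b: "b \<in> supp_r \<alpha>" "wone le \<alpha> t b \<noteq> 0" for a b
  proof (cases "a = b")
    case True then show ?thesis using below a subP by blast
  next
    case False
    show ?thesis
    proof (cases "le a b")
      case True
      then show ?thesis using mono[of a b] below[of b] transQ[of "\<phi> a" "\<phi> b" "\<psi> b"] mapsto a b subP by blast
    next
      case nle: False
      then have "le b a" using cmp a b by blast
      then have "\<alpha> a + cabove le \<alpha> a \<le> cabove le \<alpha> b" using cabove_step[of b a] a b False by auto
      moreover have "cabove le \<alpha> b < t" using wone_pos b by blast
      moreover have "t < cabove le \<alpha> a + \<alpha> a" using wone_lt a by blast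
      ultimately show ?thesis by simp
    qed
  qed
  have same: "le' (f a) (f b) \<or> le' (f b) (f a)"
    if "f = \<phi> \<or> f = \<psi>" "a \<in> supp_r \<alpha>" "b \<in> supp_r \<alpha>" for f a b
    using cmp[of a b] mono[of a b] mono[of b a] that subP by blast
  have D: "(\<exists>x\<in>supp_r \<alpha>. \<psi> x = q \<and> wone le \<alpha> t x \<noteq> 0) \<or> (\<exists>x\<in>supp_r \<alpha>. \<phi> x = q \<and> \<alpha> x - wone le \<alpha> t x \<noteq> 0)"
    if "q \<in> supp_r (stair le \<phi> \<psi> t \<alpha>)" for q
    using stair_supp[of t q] that unfolding supp_r_def by blast
  from D[OF q1] show "le' q1 q2 \<or> le' q2 q1"
  proof (elim disjE bexE conjE)
    fix a assume a: "a \<in> supp_r \<alpha>" "\<psi> a = q1" "wone le \<alpha> t a \<noteq> 0"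
    from D[OF q2] show ?thesis
    proof (elim disjE bexE conjE)
      fix b assume b: "b \<in> supp_r \<alpha>" "\<psi> b = q2" "wone le \<alpha> t b \<noteq> 0"
      show ?thesis using same[of \<psi> a b] a b by simp
    next
      fix b assume b: "b \<in> supp_r \<alpha>" "\<phi> b = q2" "\<alpha> b - wone le \<alpha> t b \<noteq> 0"
      show ?thesis using mixed[of b a] a b by simp
    qed
  next
    fix a assume a: "a \<in> supp_r \<alpha>" "\<phi> a = q1" "\<alpha> a - wone le \<alpha> t a \<noteq> 0"
    from D[OF q2] show ?thesis
    proof (elim disjE bexE conjE)
      fix b assume b: "b \<in> supp_r \<alpha>" "\<psi> b = q2" "wone le \<alpha> t b \<noteq> 0"
      show ?thesis using mixed[of a b] a b by simp
    next
      fix b assume b: "b \<in> supp_r \<alpha>" "\<phi> b = q2" "\<alpha> b - wone le \<alpha> t b \<noteq> 0"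
      show ?thesis using same[of \<phi> a b] a b by simp
    qed
  qed
qed

lemma stair_sum: "(\<Sum>q\<in>supp_r (stair le \<phi> \<psi> t \<alpha>). stair le \<phi> \<psi> t \<alpha> q) = 1"
proof -
  let ?T = "\<phi> ` supp_r \<alpha> \<union> \<psi> ` supp_r \<alpha>"
  let ?H = "stair le \<phi> \<psi> t \<alpha>"
  have fT: "finite ?T" using fin by simp
  have "(\<Sum>q\<in>supp_r ?H. ?H q) = (\<Sum>q\<in>?T. ?H q)"
    using stair_supp_sub fT by (intro sum.mono_neutral_left) (auto simp: supp_r_def)
  also have "\<dots> = (\<Sum>q\<in>?T. \<Sum>x\<in>{x\<in>supp_r \<alpha>. \<psi> x = q}. wone le \<alpha> t x)
       + (\<Sum>q\<in>?T. \<Sum>x\<in>{x\<in>supp_r \<alpha>. \<phi> x = q}. \<alpha> x - wone le \<alpha> t x)"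
    unfolding stair_def by (simp add: sum.distrib)
  also have "\<dots> = (\<Sum>x\<in>supp_r \<alpha>. wone le \<alpha> t x) + (\<Sum>x\<in>supp_r \<alpha>. \<alpha> x - wone le \<alpha> t x)"
    using fin fT by (simp add: sum.group)
  also have "\<dots> = 1" using s1 by (simp add: sum.distrib[symmetric])
  finally show ?thesis .
qed

lemma stair_carrier: "stair le \<phi> \<psi> t \<alpha> \<in> real_carrier Q le'"
proof -
  have "supp_r (stair le \<phi> \<psi> t \<alpha>) \<subseteq> Q" using stair_supp_sub mapsto subP by blast
  moreover have "finite (supp_r (stair le \<phi> \<psi> t \<alpha>))"
    using stair_supp_sub fin finite_subset by blast
  ultimately show ?thesis
    unfolding real_carrier_def mem_Collect_eq
    using stair_chain[of t] stair_nn[of t] stair_sum[of t] by (intro conjI allI) auto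
qed

lemma stair_0: "stair le \<phi> \<psi> 0 \<alpha> = realize_map \<phi> \<alpha>"
proof -
  have "wone le \<alpha> 0 x = 0" for x
    using cabove_nn[of x] unfolding wone_def by simp
  then show ?thesis unfolding stair_def realize_map_def by simp
qed

lemma stair_1: "stair le \<phi> \<psi> 1 \<alpha> = realize_map \<psi> \<alpha>"
proof -
  have "wone le \<alpha> 1 x = \<alpha> x" if x: "x \<in> supp_r \<alpha>" for x
  proof -
    let ?B = "{y\<in>supp_r \<alpha>. y \<noteq> x \<and> le x y}"
    have "\<alpha> x + cabove le \<alpha> x = (\<Sum>y\<in>insert x ?B. \<alpha> y)"
      unfolding cabove_def using fin by (subst sum.insert) auto
    also have "\<dots> \<le> (\<Sum>y\<in>supp_r \<alpha>. \<alpha> y)"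
      using x fin nn by (intro sum_mono2) auto
    finally have "\<alpha> x \<le> 1 - cabove le \<alpha> x" using s1 by simp
    then show ?thesis unfolding wone_def using nn[of x] by simp
  qed
  then show ?thesis unfolding stair_def realize_map_def by (auto intro!: sum.neutral)
qed

end

end




definition caboveS :: "('p \<Rightarrow> 'p \<Rightarrow> bool) \<Rightarrow> 'p set \<Rightarrow> ('p \<Rightarrow> real) \<Rightarrow> 'p \<Rightarrow> real" where
  "caboveS le \<sigma> \<alpha> x = (\<Sum>y\<in>{y\<in>\<sigma>. y \<noteq> x \<and> le x y}. \<alpha> y)"

definition woneS :: "('p \<Rightarrow> 'p \<Rightarrow> bool) \<Rightarrow> 'p set \<Rightarrow> ('p \<Rightarrow> real) \<Rightarrow> real \<Rightarrow> 'p \<Rightarrow> real" where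
  "woneS le \<sigma> \<alpha> t x = max 0 (min (\<alpha> x) (t - caboveS le \<sigma> \<alpha> x))"

definition stairS :: "('p \<Rightarrow> 'p \<Rightarrow> bool) \<Rightarrow> ('p \<Rightarrow> 'q) \<Rightarrow> ('p \<Rightarrow> 'q) \<Rightarrow> 'p set \<Rightarrow> real \<Rightarrow> ('p \<Rightarrow> real) \<Rightarrow> ('q \<Rightarrow> real)" where
  "stairS le \<phi> \<psi> \<sigma> t \<alpha> = (\<lambda>q. (\<Sum>x\<in>{x\<in>\<sigma>. \<psi> x = q}. woneS le \<sigma> \<alpha> t x)
       + (\<Sum>x\<in>{x\<in>\<sigma>. \<phi> x = q}. \<alpha> x - woneS le \<sigma> \<alpha> t x))"

lemma stair_eq_stairS:
  assumes fin: "finite \<sigma>" and sub: "supp_r \<alpha> \<subseteq> \<sigma>"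
  shows "stair le \<phi> \<psi> t \<alpha> = stairS le \<phi> \<psi> \<sigma> t \<alpha>"
proof -
  have z: "\<alpha> x = 0" if "x \<notin> supp_r \<alpha>" for x using that unfolding supp_r_def by simp
  have c: "cabove le \<alpha> x = caboveS le \<sigma> \<alpha> x" for x
    unfolding cabove_def caboveS_def
    using fin sub z by (intro sum.mono_neutral_left) auto
  have w: "wone le \<alpha> t x = woneS le \<sigma> \<alpha> t x" for x
    unfolding wone_def woneS_def c ..
  have w0: "woneS le \<sigma> \<alpha> t x = 0" if "x \<notin> supp_r \<alpha>" for x
    unfolding woneS_def using z[OF that] by simp
  show ?thesis
    unfolding stair_def stairS_def w
  proof (rule ext)
    fix q
    have "(\<Sum>x\<in>{x\<in>supp_r \<alpha>. \<psi> x = q}. woneS le \<sigma> \<alpha> t x) = (\<Sum>x\<in>{x\<in>\<sigma>. \<psi> x = q}. woneS le \<sigma> \<alpha> t x)"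
      using fin sub w0 by (intro sum.mono_neutral_left) auto
    moreover have "(\<Sum>x\<in>{x\<in>supp_r \<alpha>. \<phi> x = q}. \<alpha> x - woneS le \<sigma> \<alpha> t x) = (\<Sum>x\<in>{x\<in>\<sigma>. \<phi> x = q}. \<alpha> x - woneS le \<sigma> \<alpha> t x)"
      using fin sub w0 z by (intro sum.mono_neutral_left) (auto, metis diff_self)
    ultimately show "(\<Sum>x\<in>{x\<in>supp_r \<alpha>. \<psi> x = q}. woneS le \<sigma> \<alpha> t x) + (\<Sum>x\<in>{x\<in>supp_r \<alpha>. \<phi> x = q}. \<alpha> x - woneS le \<sigma> \<alpha> t x)
      = (\<Sum>x\<in>{x\<in>\<sigma>. \<psi> x = q}. woneS le \<sigma> \<alpha> t x) + (\<Sum>x\<in>{x\<in>\<sigma>. \<phi> x = q}. \<alpha> x - woneS le \<sigma> \<alpha> t x)"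
      by simp
  qed
qed

lemmas coord_cont [continuous_intros] = continuous_on_product_then_coordinatewise

lemma stairS_cont:
  "continuous_on UNIV (\<lambda>z::real \<times> ('p \<Rightarrow> real). stairS le \<phi> \<psi> \<sigma> (fst z) (snd z))"
  unfolding stairS_def woneS_def caboveS_def
  by (intro continuous_intros)




lemma closed_simplex_eq:
  fixes \<tau> :: "'a set"
  assumes "finite \<tau>" "\<tau> \<subseteq> Q" "is_chain le' \<tau>"
  shows "closed_simplex Q le' \<tau> = (\<Inter>q\<in>-\<tau>. {\<alpha>::'a\<Rightarrow>real. \<alpha> q = 0}) \<inter> (\<Inter>q. {\<alpha>::'a\<Rightarrow>real. 0 \<le> \<alpha> q}) \<inter> {\<alpha>::'a\<Rightarrow>real. (\<Sum>q\<in>\<tau>. \<alpha> q) = 1}"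
proof (intro set_eqI iffI)
  fix \<alpha> :: "'a \<Rightarrow> real" assume a: "\<alpha> \<in> closed_simplex Q le' \<tau>"
  then have s: "supp_r \<alpha> \<subseteq> \<tau>" "(\<Sum>p\<in>supp_r \<alpha>. \<alpha> p) = 1" "\<forall>p. 0 \<le> \<alpha> p"
    unfolding closed_simplex_def real_carrier_def by auto
  have "(\<Sum>p\<in>supp_r \<alpha>. \<alpha> p) = (\<Sum>p\<in>\<tau>. \<alpha> p)"
    using s(1) assms(1) by (intro sum.mono_neutral_left) (auto simp: supp_r_def)
  then show "\<alpha> \<in> (\<Inter>q\<in>-\<tau>. {\<alpha>::'a\<Rightarrow>real. \<alpha> q = 0}) \<inter> (\<Inter>q. {\<alpha>::'a\<Rightarrow>real. 0 \<le> \<alpha> q}) \<inter> {\<alpha>::'a\<Rightarrow>real. (\<Sum>q\<in>\<tau>. \<alpha> q) = 1}"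
    using s unfolding supp_r_def by auto
next
  fix \<alpha> :: "'a \<Rightarrow> real" assume a: "\<alpha> \<in> (\<Inter>q\<in>-\<tau>. {\<alpha>::'a\<Rightarrow>real. \<alpha> q = 0}) \<inter> (\<Inter>q. {\<alpha>::'a\<Rightarrow>real. 0 \<le> \<alpha> q}) \<inter> {\<alpha>::'a\<Rightarrow>real. (\<Sum>q\<in>\<tau>. \<alpha> q) = 1}"
  then have s: "supp_r \<alpha> \<subseteq> \<tau>" "(\<Sum>p\<in>\<tau>. \<alpha> p) = 1" "\<forall>p. 0 \<le> \<alpha> p"
    unfolding supp_r_def by auto
  have "(\<Sum>p\<in>supp_r \<alpha>. \<alpha> p) = (\<Sum>p\<in>\<tau>. \<alpha> p)"
    using s(1) assms(1) by (intro sum.mono_neutral_left) (auto simp: supp_r_def)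
  moreover have "finite (supp_r \<alpha>)" using s(1) assms(1) finite_subset by blast
  moreover have "is_chain le' (supp_r \<alpha>)" using s(1) assms(3) unfolding is_chain_def by blast
  ultimately show "\<alpha> \<in> closed_simplex Q le' \<tau>"
    unfolding closed_simplex_def real_carrier_def using s assms(2) by auto
qed

lemma closed_closed_simplex:
  fixes \<tau> :: "'a set"
  assumes "finite \<tau>" "\<tau> \<subseteq> Q" "is_chain le' \<tau>"
  shows "closed (closed_simplex Q le' \<tau>)"
  unfolding closed_simplex_eq[OF assms]
proof (intro closed_Int closed_INT ballI allI)
  fix q
  show "closed {\<alpha>::'a\<Rightarrow>real. \<alpha> q = 0}"
    by (rule closed_Collect_eq) (intro continuous_intros)+
  show "closed {\<alpha>::'a\<Rightarrow>real. 0 \<le> \<alpha> q}"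
    by (rule closed_Collect_le) (intro continuous_intros)+
next
  show "closed {\<alpha>::'a\<Rightarrow>real. (\<Sum>q\<in>\<tau>. \<alpha> q) = 1}"
    by (rule closed_Collect_eq) (intro continuous_intros)+
qed

lemma finite_union_open:
  assumes fS: "finite S" and SQ: "S \<subseteq> Q" and U: "openin (realization Q le') U"
  shows "\<exists>Ob. open Ob \<and> U \<inter> {\<beta>\<in>real_carrier Q le'. supp_r \<beta> \<subseteq> S} = Ob \<inter> {\<beta>\<in>real_carrier Q le'. supp_r \<beta> \<subseteq> S}"
proof -
  define X where "X = {\<beta>\<in>real_carrier Q le'. supp_r \<beta> \<subseteq> S}"
  define K where "K = {\<tau>. \<tau> \<subseteq> S \<and> is_chain le' \<tau>}"
  have "K \<subseteq> Pow S" unfolding K_def by blast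
  then have fK: "finite K" using fS finite_subset by blast
  have Kp: "finite \<tau> \<and> \<tau> \<subseteq> Q \<and> is_chain le' \<tau>" if "\<tau> \<in> K" for \<tau>
    using that fS SQ finite_subset unfolding K_def by blast
  have Xeq: "X = (\<Union>\<tau>\<in>K. closed_simplex Q le' \<tau>)"
  proof (intro set_eqI iffI)
    fix \<beta> assume "\<beta> \<in> X"
    then have "supp_r \<beta> \<in> K" "\<beta> \<in> closed_simplex Q le' (supp_r \<beta>)"
      unfolding X_def K_def closed_simplex_def real_carrier_def by auto
    then show "\<beta> \<in> (\<Union>\<tau>\<in>K. closed_simplex Q le' \<tau>)" by blast
  next
    fix \<beta> assume "\<beta> \<in> (\<Union>\<tau>\<in>K. closed_simplex Q le' \<tau>)"
    then show "\<beta> \<in> X" unfolding X_def K_def closed_simplex_def by blast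
  qed
  have cl: "closed (closed_simplex Q le' \<tau> - U)" if "\<tau> \<in> K" for \<tau>
  proof -
    have "openin (top_of_set (closed_simplex Q le' \<tau>)) (U \<inter> closed_simplex Q le' \<tau>)"
      using U Kp[OF that] unfolding openin_realization by blast
    then obtain O' where O': "open O'" "U \<inter> closed_simplex Q le' \<tau> = closed_simplex Q le' \<tau> \<inter> O'"
      unfolding openin_open by blast
    have "closed_simplex Q le' \<tau> - U = closed_simplex Q le' \<tau> \<inter> - O'" using O'(2) by blast
    then show ?thesis using closed_closed_simplex[of \<tau> Q le'] Kp[OF that] O'(1)
      by (simp add: closed_Int open_closed)
  qed
  define F where "F = (\<Union>\<tau>\<in>K. closed_simplex Q le' \<tau> - U)"
  have "closed F" unfolding F_def using fK cl by blast
  have eq: "U \<inter> X = - F \<inter> X"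
  proof (intro set_eqI iffI)
    fix \<beta> assume "\<beta> \<in> U \<inter> X" then show "\<beta> \<in> - F \<inter> X" unfolding F_def by blast
  next
    fix \<beta> assume b: "\<beta> \<in> - F \<inter> X"
    then obtain \<tau> where "\<tau> \<in> K" "\<beta> \<in> closed_simplex Q le' \<tau>" using Xeq by blast
    then show "\<beta> \<in> U \<inter> X" using b unfolding F_def by blast
  qed
  show ?thesis
  proof (intro exI conjI)
    show "open (- F)" using \<open>closed F\<close> by (simp add: open_Compl)
    show "U \<inter> {\<beta> \<in> real_carrier Q le'. supp_r \<beta> \<subseteq> S} = - F \<inter> {\<beta> \<in> real_carrier Q le'. supp_r \<beta> \<subseteq> S}"
      using eq unfolding X_def .
  qed
qed




context stair_setup begin

lemma slice_open:
  assumes \<sigma>: "finite \<sigma>" "\<sigma> \<subseteq> P" "is_chain le \<sigma>" and U: "openin (realization Q le') U"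
  shows "openin (prod_topology (top_of_set {0..1::real}) (top_of_set (closed_simplex P le \<sigma>)))
           {z \<in> {0..1} \<times> closed_simplex P le \<sigma>. stair le \<phi> \<psi> (fst z) (snd z) \<in> U}"
proof -
  define S where "S = \<phi> ` \<sigma> \<union> \<psi> ` \<sigma>"
  have fS: "finite S" "S \<subseteq> Q" unfolding S_def using \<sigma> mapsto by auto
  obtain Ob where Ob: "open Ob" "U \<inter> {\<beta>\<in>real_carrier Q le'. supp_r \<beta> \<subseteq> S} = Ob \<inter> {\<beta>\<in>real_carrier Q le'. supp_r \<beta> \<subseteq> S}"
    using finite_union_open[OF fS U] by blast
  let ?D = "{0..1::real} \<times> closed_simplex P le \<sigma>"
  let ?g = "\<lambda>z::real \<times> ('p \<Rightarrow> real). stairS le \<phi> \<psi> \<sigma> (fst z) (snd z)"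
  have inX: "stair le \<phi> \<psi> (fst z) (snd z) \<in> {\<beta>\<in>real_carrier Q le'. supp_r \<beta> \<subseteq> S}"
    and geq: "stair le \<phi> \<psi> (fst z) (snd z) = ?g z" if z: "z \<in> ?D" for z
  proof -
    have a: "snd z \<in> real_carrier P le" "supp_r (snd z) \<subseteq> \<sigma>"
      using z unfolding closed_simplex_def by auto
    show "stair le \<phi> \<psi> (fst z) (snd z) \<in> {\<beta>\<in>real_carrier Q le'. supp_r \<beta> \<subseteq> S}"
      using stair_carrier[OF a(1)] stair_supp_sub[OF a(1), of "fst z"] a(2) unfolding S_def by blast
    show "stair le \<phi> \<psi> (fst z) (snd z) = ?g z"
      by (rule stair_eq_stairS[OF \<sigma>(1) a(2)])
  qed
  have "{z \<in> ?D. stair le \<phi> \<psi> (fst z) (snd z) \<in> U} = ?D \<inter> ?g -` Ob"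
  proof (intro set_eqI iffI)
    fix z assume "z \<in> {z \<in> ?D. stair le \<phi> \<psi> (fst z) (snd z) \<in> U}"
    then have z: "z \<in> ?D" and u: "stair le \<phi> \<psi> (fst z) (snd z) \<in> U" by auto
    have "stair le \<phi> \<psi> (fst z) (snd z) \<in> U \<inter> {\<beta>\<in>real_carrier Q le'. supp_r \<beta> \<subseteq> S}"
      using u inX[OF z] by (rule IntI)
    then have "stair le \<phi> \<psi> (fst z) (snd z) \<in> Ob" unfolding Ob(2) by (rule IntD1)
    then show "z \<in> ?D \<inter> ?g -` Ob" using z geq[OF z] by simp
  next
    fix z assume "z \<in> ?D \<inter> ?g -` Ob"
    then have z: "z \<in> ?D" and u: "?g z \<in> Ob" by auto
    have "stair le \<phi> \<psi> (fst z) (snd z) \<in> Ob \<inter> {\<beta>\<in>real_carrier Q le'. supp_r \<beta> \<subseteq> S}"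
      using u geq[OF z] inX[OF z] by simp
    then have "stair le \<phi> \<psi> (fst z) (snd z) \<in> U" unfolding Ob(2)[symmetric] by (rule IntD1)
    then show "z \<in> {z \<in> ?D. stair le \<phi> \<psi> (fst z) (snd z) \<in> U}" using z by simp
  qed
  moreover have "openin (top_of_set ?D) (?D \<inter> ?g -` Ob)"
    using continuous_on_subset[OF stairS_cont subset_UNIV] Ob(1) by (rule continuous_openin_preimage_gen)
  ultimately show ?thesis by simp
qed

lemma stair_cont:
  "continuous_map (prod_topology (top_of_set {0..1::real}) (realization P le)) (realization Q le')
     (\<lambda>z. stair le \<phi> \<psi> (fst z) (snd z))"
  unfolding continuous_map_def topspace_prod_topology topspace_realization
proof (intro conjI allI impI)
  show "(\<lambda>z. stair le \<phi> \<psi> (fst z) (snd z)) \<in> topspace (top_of_set {0..1::real}) \<times> real_carrier P le \<rightarrow> real_carrier Q le'"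
    using stair_carrier by auto
  fix U assume U: "openin (realization Q le') U"
  let ?W = "{x \<in> topspace (top_of_set {0..1::real}) \<times> real_carrier P le. stair le \<phi> \<psi> (fst x) (snd x) \<in> U}"
  show "openin (prod_topology (top_of_set {0..1::real}) (realization P le)) ?W"
    unfolding openin_prod_topology_alt
  proof (intro allI impI)
    fix t0 \<alpha>0 assume z0: "(t0, \<alpha>0) \<in> ?W"
    then have t0: "t0 \<in> {0..1}" and a0: "\<alpha>0 \<in> real_carrier P le" and hU: "stair le \<phi> \<psi> t0 \<alpha>0 \<in> U" by auto
    define \<sigma>0 where "\<sigma>0 = supp_r \<alpha>0"
    have s0: "finite \<sigma>0" "\<sigma>0 \<subseteq> P" "is_chain le \<sigma>0" using a0 unfolding \<sigma>0_def real_carrier_def by auto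
    have a0s: "\<alpha>0 \<in> closed_simplex P le \<sigma>0" using a0 unfolding closed_simplex_def \<sigma>0_def by auto
    have mem: "(t0, \<alpha>0) \<in> {z \<in> {0..1} \<times> closed_simplex P le \<sigma>0. stair le \<phi> \<psi> (fst z) (snd z) \<in> U}"
      using t0 a0s hU by simp
    obtain A B where AB: "openin (top_of_set {0..1::real}) A"
      "openin (top_of_set (closed_simplex P le \<sigma>0)) B" "t0 \<in> A" "\<alpha>0 \<in> B"
      "A \<times> B \<subseteq> {z \<in> {0..1} \<times> closed_simplex P le \<sigma>0. stair le \<phi> \<psi> (fst z) (snd z) \<in> U}"
      using slice_open[OF s0 U, unfolded openin_prod_topology_alt, rule_format, OF mem] by blast
    obtain e where e: "e > 0" "\<forall>x'\<in>{0..1}. dist x' t0 < e \<longrightarrow> x' \<in> A"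
      using AB(1) AB(3) unfolding openin_euclidean_subtopology_iff by blast
    define N where "N = {0..1::real} \<inter> cball t0 (e/2)"
    define A' where "A' = {0..1::real} \<inter> ball t0 (e/2)"
    have NA: "N \<subseteq> A" unfolding N_def using e by (auto simp: dist_commute)
    have cN: "compactin (top_of_set {0..1::real}) N"
      unfolding compactin_subtopology compactin_euclidean_iff N_def
      by (auto intro: compact_Int_closed)
    have oA': "openin (top_of_set {0..1::real}) A'" unfolding A'_def by (intro openin_open_Int) simp
    have tA': "t0 \<in> A'" unfolding A'_def using t0 e by simp
    have A'N: "A' \<subseteq> N" unfolding A'_def N_def by auto
    define V where "V = {\<alpha> \<in> real_carrier P le. N \<times> {\<alpha>} \<subseteq> ?W}"
    have oV: "openin (realization P le) V"
      unfolding openin_realization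
    proof (intro conjI allI impI)
      show "V \<subseteq> real_carrier P le" unfolding V_def by blast
      fix \<sigma> assume \<sigma>: "finite \<sigma> \<and> \<sigma> \<subseteq> P \<and> is_chain le \<sigma>"
      let ?W\<sigma> = "{z \<in> {0..1} \<times> closed_simplex P le \<sigma>. stair le \<phi> \<psi> (fst z) (snd z) \<in> U}"
      have W\<sigma>: "openin (prod_topology (top_of_set {0..1::real}) (top_of_set (closed_simplex P le \<sigma>))) ?W\<sigma>"
        using slice_open \<sigma> U by blast
      show "openin (top_of_set (closed_simplex P le \<sigma>)) (V \<inter> closed_simplex P le \<sigma>)"
        unfolding openin_subopen[of _ "V \<inter> closed_simplex P le \<sigma>"]
      proof (intro ballI)
        fix \<alpha>1 assume a1: "\<alpha>1 \<in> V \<inter> closed_simplex P le \<sigma>"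
        have "N \<times> {\<alpha>1} \<subseteq> ?W\<sigma>"
        proof
          fix z assume "z \<in> N \<times> {\<alpha>1}"
          then have "z \<in> ?W" "snd z = \<alpha>1" using a1 unfolding V_def by auto
          then show "z \<in> ?W\<sigma>" using a1 by auto
        qed
        then obtain U1 V1 where UV0: "openin (top_of_set (closed_simplex P le \<sigma>)) V1" "\<alpha>1 \<in> V1" "N \<subseteq> U1" "U1 \<times> V1 \<subseteq> ?W\<sigma>"
          using tube_lemma_left[OF W\<sigma> cN, of \<alpha>1] a1 by auto
        have UV1: "openin (top_of_set (closed_simplex P le \<sigma>)) V1" "\<alpha>1 \<in> V1" "N \<times> V1 \<subseteq> ?W\<sigma>"
          using UV0 by auto
        have "V1 \<subseteq> V \<inter> closed_simplex P le \<sigma>"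
        proof
          fix \<alpha> assume a: "\<alpha> \<in> V1"
          then have ac: "\<alpha> \<in> closed_simplex P le \<sigma>" using openin_subset[OF UV1(1)] by auto
          then have "\<alpha> \<in> real_carrier P le" using closed_simplex_sub by blast
          moreover have "N \<times> {\<alpha>} \<subseteq> ?W"
          proof (intro subsetI)
            fix z assume "z \<in> N \<times> {\<alpha>}"
            then obtain t where z: "z = (t, \<alpha>)" "t \<in> N" by blast
            then have "(t, \<alpha>) \<in> N \<times> V1" using a by blast
            then have "(t, \<alpha>) \<in> ?W\<sigma>" using UV1(3) by blast
            then show "z \<in> ?W" using z \<open>\<alpha> \<in> real_carrier P le\<close> by simp
          qed
          ultimately show "\<alpha> \<in> V \<inter> closed_simplex P le \<sigma>" using ac unfolding V_def by blast
        qed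
        then show "\<exists>T. openin (top_of_set (closed_simplex P le \<sigma>)) T \<and> \<alpha>1 \<in> T \<and> T \<subseteq> V \<inter> closed_simplex P le \<sigma>"
          using UV1 by blast
      qed
    qed
    have a0V: "\<alpha>0 \<in> V"
    proof -
      have "N \<times> {\<alpha>0} \<subseteq> ?W"
      proof (intro subsetI)
        fix z assume "z \<in> N \<times> {\<alpha>0}"
        then obtain t where z: "z = (t, \<alpha>0)" "t \<in> N" by blast
        then have "(t, \<alpha>0) \<in> A \<times> B" using NA AB(4) by blast
        then have "(t, \<alpha>0) \<in> {z \<in> {0..1} \<times> closed_simplex P le \<sigma>0. stair le \<phi> \<psi> (fst z) (snd z) \<in> U}"
          using AB(5) by blast
        then show "z \<in> ?W" using z a0 by simp
      qed
      then show ?thesis unfolding V_def using a0 by blast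
    qed
    have "A' \<times> V \<subseteq> ?W" using A'N unfolding V_def by blast
    then show "\<exists>U V. openin (top_of_set {0..1}) U \<and> openin (realization P le) V \<and> t0 \<in> U \<and> \<alpha>0 \<in> V \<and> U \<times> V \<subseteq> ?W"
      using oA' oV tA' a0V by blast
  qed
qed

lemma stair_homotopic:
  "homotopic_with (\<lambda>_. True) (realization P le) (realization Q le') (realize_map \<phi>) (realize_map \<psi>)"
proof -
  have "homotopic_with (\<lambda>_. True) (realization P le) (realization Q le')
          (\<lambda>\<alpha>. stair le \<phi> \<psi> 0 \<alpha>) (\<lambda>\<alpha>. stair le \<phi> \<psi> 1 \<alpha>)"
    unfolding homotopic_with_def
    by (intro exI[of _ "\<lambda>z. stair le \<phi> \<psi> (fst z) (snd z)"] conjI stair_cont) auto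
  then show ?thesis
    by (rule homotopic_with_eq) (auto simp: topspace_realization stair_0 stair_1)
qed

end




definition mpush :: "('b \<Rightarrow> 'c set) \<Rightarrow> ('a \<Rightarrow> 'b set) \<Rightarrow> ('a \<Rightarrow> 'c set)" where
  "mpush \<eta> \<alpha> = (\<lambda>v. \<Union>y\<in>\<alpha> v. \<eta> y)"

lemma mpush_hom:
  assumes \<eta>: "\<eta> \<in> Hom2 VY EdY cY VZ EdZ cZ" and \<alpha>: "\<alpha> \<in> Hom2 VX EdX cX VY EdY cY"
  shows "mpush \<eta> \<alpha> \<in> Hom2 VX EdX cX VZ EdZ cZ"
proof -
  have mh\<eta>: "multi_hom2 VY EdY cY VZ EdZ cZ \<eta>" using \<eta> by (simp add: Hom2_def)
  have mh\<alpha>: "multi_hom2 VX EdX cX VY EdY cY \<alpha>" using \<alpha> by (simp add: Hom2_def)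
  have e1: "\<And>y. y\<in>VY \<Longrightarrow> finite (\<eta> y) \<and> \<eta> y \<noteq> {} \<and> \<eta> y \<subseteq> VZ \<and> (\<forall>w\<in>\<eta> y. cZ w = cY y)"
    using mh\<eta> unfolding multi_hom2_def by blast
  have e2: "\<eta> y \<times> \<eta> y' \<subseteq> EdZ" if "(y,y')\<in>EdY" for y y'
  proof -
    have "\<forall>(v,w)\<in>EdY. \<eta> v \<times> \<eta> w \<subseteq> EdZ" using mh\<eta> unfolding multi_hom2_def by blast
    from bspec[OF this that] show ?thesis by simp
  qed
  have a1: "\<And>v. v\<in>VX \<Longrightarrow> finite (\<alpha> v) \<and> \<alpha> v \<noteq> {} \<and> \<alpha> v \<subseteq> VY \<and> (\<forall>w\<in>\<alpha> v. cY w = cX v)"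
    using mh\<alpha> unfolding multi_hom2_def by blast
  have a2: "\<alpha> v \<times> \<alpha> w \<subseteq> EdY" if "(v,w)\<in>EdX" for v w
  proof -
    have "\<forall>(v,w)\<in>EdX. \<alpha> v \<times> \<alpha> w \<subseteq> EdY" using mh\<alpha> unfolding multi_hom2_def by blast
    from bspec[OF this that] show ?thesis by simp
  qed
  have a3: "\<And>v. v \<notin> VX \<Longrightarrow> \<alpha> v = {}" using mh\<alpha> unfolding multi_hom2_def by blast
  note e = e1 e2
  note a = a1 a2 a3
  have 1: "finite (mpush \<eta> \<alpha> v) \<and> mpush \<eta> \<alpha> v \<noteq> {} \<and> mpush \<eta> \<alpha> v \<subseteq> VZ \<and> (\<forall>w\<in>mpush \<eta> \<alpha> v. cZ w = cX v)"
    if v: "v \<in> VX" for v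
  proof -
    have av: "finite (\<alpha> v)" "\<alpha> v \<noteq> {}" "\<alpha> v \<subseteq> VY" "\<forall>w\<in>\<alpha> v. cY w = cX v" using a(1)[OF v] by auto
    have fy: "finite (\<eta> y)" if "y \<in> \<alpha> v" for y
    proof -
      have "y \<in> VY" using av(3) that by blast
      then show ?thesis using e1 by blast
    qed
    have "finite (mpush \<eta> \<alpha> v)" unfolding mpush_def by (rule finite_UN_I[OF av(1) fy])
    moreover have "mpush \<eta> \<alpha> v \<noteq> {}"
    proof -
      obtain y where y: "y \<in> \<alpha> v" using av(2) by blast
      then have "y \<in> VY" using av(3) by blast
      then obtain w where "w \<in> \<eta> y" using e1 by blast
      then show ?thesis unfolding mpush_def using y by blast
    qed
    moreover have "mpush \<eta> \<alpha> v \<subseteq> VZ"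
    proof
      fix w assume "w \<in> mpush \<eta> \<alpha> v"
      then obtain y where y: "y \<in> \<alpha> v" "w \<in> \<eta> y" unfolding mpush_def by blast
      then have "y \<in> VY" using av(3) by blast
      then show "w \<in> VZ" using e1 y(2) by blast
    qed
    moreover have "\<forall>w\<in>mpush \<eta> \<alpha> v. cZ w = cX v"
    proof
      fix w assume "w \<in> mpush \<eta> \<alpha> v"
      then obtain y where y: "y \<in> \<alpha> v" "w \<in> \<eta> y" unfolding mpush_def by blast
      then have "y \<in> VY" using av(3) by blast
      then have "cZ w = cY y" using e1 y(2) by blast
      then show "cZ w = cX v" using av(4) y(1) by simp
    qed
    ultimately show ?thesis by blast
  qed
  have 2: "mpush \<eta> \<alpha> v \<times> mpush \<eta> \<alpha> w \<subseteq> EdZ" if "(v,w)\<in>EdX" for v w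
  proof
    fix p assume "p \<in> mpush \<eta> \<alpha> v \<times> mpush \<eta> \<alpha> w"
    then obtain y y' where "y \<in> \<alpha> v" "y' \<in> \<alpha> w" "fst p \<in> \<eta> y" "snd p \<in> \<eta> y'"
      unfolding mpush_def by auto
    moreover have "(y,y') \<in> EdY" using a(2)[OF that] calculation by blast
    ultimately show "p \<in> EdZ" using e(2) by (metis mem_Sigma_iff prod.collapse subsetD)
  qed
  have 3: "mpush \<eta> \<alpha> v = {}" if "v \<notin> VX" for v unfolding mpush_def using a(3)[OF that] by simp
  show ?thesis unfolding Hom2_def multi_hom2_def using 1 2 3 by blast
qed

lemma mpush_mono: "hom_le \<alpha> \<beta> \<Longrightarrow> hom_le (mpush \<eta> \<alpha>) (mpush \<eta> \<beta>)"
  unfolding hom_le_def mpush_def by blast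

lemma mpush_below: "hom_le \<eta> \<eta>' \<Longrightarrow> hom_le (mpush \<eta> \<alpha>) (mpush \<eta>' \<alpha>)"
  unfolding hom_le_def mpush_def by blast

lemma hom_le_refl: "hom_le x x" unfolding hom_le_def by simp
lemma hom_le_trans: "hom_le x y \<Longrightarrow> hom_le y z \<Longrightarrow> hom_le x z" unfolding hom_le_def by blast
lemma hom_le_anti: "hom_le x y \<Longrightarrow> hom_le y x \<Longrightarrow> x = y" unfolding hom_le_def by (auto intro!: ext)

lemma mpush_homotopic:
  assumes "\<eta> \<in> Hom2 VY EdY cY VZ EdZ cZ" "\<eta>' \<in> Hom2 VY EdY cY VZ EdZ cZ" "hom_le \<eta> \<eta>'"
  shows "homotopic_with (\<lambda>_. True) (realization (Hom2 VX EdX cX VY EdY cY) hom_le)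
           (realization (Hom2 VX EdX cX VZ EdZ cZ) hom_le) (realize_map (mpush \<eta>)) (realize_map (mpush \<eta>'))"
proof -
  interpret stair_setup "Hom2 VX EdX cX VY EdY cY" hom_le "Hom2 VX EdX cX VZ EdZ cZ" hom_le "mpush \<eta>" "mpush \<eta>'"
    by unfold_locales (use assms in \<open>auto intro: hom_le_trans hom_le_anti hom_le_refl mpush_hom mpush_mono mpush_below\<close>)
  show ?thesis by (rule stair_homotopic)
qed




lemma mpush_sing:
  assumes "p \<in> Hom2 VX EdX cX VY EdY cY"
  shows "mpush (sing_hom VY f) p = push f p"
proof
  fix v
  show "mpush (sing_hom VY f) p v = push f p v"
  proof (cases "v \<in> VX")
    case True
    then have "p v \<subseteq> VY" using assms unfolding Hom2_def multi_hom2_def by blast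
    then show ?thesis unfolding mpush_def push_def sing_hom_def by auto
  next
    case False
    then have "p v = {}" using assms unfolding Hom2_def multi_hom2_def by blast
    then show ?thesis unfolding mpush_def push_def by simp
  qed
qed

lemma realize_map_mpush_sing:
  assumes "\<alpha> \<in> real_carrier (Hom2 VX EdX cX VY EdY cY) hom_le"
  shows "realize_map (mpush (sing_hom VY f)) \<alpha> = realize_map (push f) \<alpha>"
proof -
  have "supp_r \<alpha> \<subseteq> Hom2 VX EdX cX VY EdY cY" using assms unfolding real_carrier_def by blast
  then have "{p \<in> supp_r \<alpha>. mpush (sing_hom VY f) p = q} = {p \<in> supp_r \<alpha>. push f p = q}" for q
  proof (intro Collect_cong conj_cong refl)
    fix p assume "supp_r \<alpha> \<subseteq> Hom2 VX EdX cX VY EdY cY" "p \<in> supp_r \<alpha>"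
    then have "p \<in> Hom2 VX EdX cX VY EdY cY" by blast
    then show "(mpush (sing_hom VY f) p = q) = (push f p = q)" by (simp add: mpush_sing)
  qed
  then show ?thesis unfolding realize_map_def by simp
qed

theorem lemma3p1:
  fixes VX :: "'a set" and EdX :: "('a \<times> 'a) set" and cX :: "'a \<Rightarrow> nat"
    and VY :: "'b set" and EdY :: "('b \<times> 'b) set" and cY :: "'b \<Rightarrow> nat"
    and VZ :: "'c set" and EdZ :: "('c \<times> 'c) set" and cZ :: "'c \<Rightarrow> nat"
    and f g :: "'b \<Rightarrow> 'c"
  assumes "bigraph VY EdY cY" and "bigraph VZ EdZ cZ"
    and "bigraph_hom VY EdY cY VZ EdZ cZ f" and "bigraph_hom VY EdY cY VZ EdZ cZ g"
    and "x_homotopic VY EdY cY VZ EdZ cZ f g"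
    and "bigraph VX EdX cX"
  shows "homotopic_with (\<lambda>_. True)
           (realization (Hom2 VX EdX cX VY EdY cY) hom_le)
           (realization (Hom2 VX EdX cX VZ EdZ cZ) hom_le)
           (realize_map (push f)) (realize_map (push g))"
proof -
  let ?H = "Hom2 VY EdY cY VZ EdZ cZ"
  let ?XY = "realization (Hom2 VX EdX cX VY EdY cY) hom_le"
  let ?XZ = "realization (Hom2 VX EdX cX VZ EdZ cZ) hom_le"
  define R where "R = (\<lambda>x y. x \<in> ?H \<and> y \<in> ?H \<and> (hom_le x y \<or> hom_le y x))"
  have cc: "connected_component_of (realization ?H hom_le) (vertex_pt (sing_hom VY f)) (vertex_pt (sing_hom VY g))"
    using assms(5) unfolding x_homotopic_def .
  have rt: "R\<^sup>*\<^sup>* (sing_hom VY f) (sing_hom VY g)"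
    using realization_component_comparable[OF cc] unfolding R_def .
  have sf: "sing_hom VY f \<in> ?H"
  proof -
    obtain T where T: "connectedin (realization ?H hom_le) T" "vertex_pt (sing_hom VY f) \<in> T"
      using cc unfolding connected_component_of_def by blast
    then have "vertex_pt (sing_hom VY f) \<in> real_carrier ?H hom_le"
      using connectedin_subset_topspace topspace_realization by blast
    then show ?thesis unfolding real_carrier_def by simp
  qed
  have main: "homotopic_with (\<lambda>_. True) ?XY ?XZ (realize_map (mpush (sing_hom VY f))) (realize_map (mpush b))
     \<and> b \<in> ?H" if "R\<^sup>*\<^sup>* (sing_hom VY f) b" for b
    using that
  proof (induction rule: rtranclp_induct)
    case base
    then show ?case using mpush_homotopic[OF sf sf hom_le_refl] sf by blast
  next
    case (step b c)
    then have bc: "b \<in> ?H" "c \<in> ?H" "hom_le b c \<or> hom_le c b" unfolding R_def by auto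
    have "homotopic_with (\<lambda>_. True) ?XY ?XZ (realize_map (mpush b)) (realize_map (mpush c))"
      using bc(3)
    proof
      assume "hom_le b c" then show ?thesis using mpush_homotopic[OF bc(1,2)] by blast
    next
      assume "hom_le c b" then show ?thesis using mpush_homotopic[OF bc(2,1)] homotopic_with_symD by blast
    qed
    then show ?case using step.IH bc(2) homotopic_with_trans by blast
  qed
  have "homotopic_with (\<lambda>_. True) ?XY ?XZ (realize_map (mpush (sing_hom VY f))) (realize_map (mpush (sing_hom VY g)))"
    using main[OF rt] by blast
  then show ?thesis
    by (rule homotopic_with_eq) (auto simp: topspace_realization realize_map_mpush_sing)
qed


end
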